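(* Let $\mathcal{H}$ be a complex Hilbert space, $A\in\mathcal{B}(\mathcal{H})$ positive and $S\in\mathcal{B}_A(\mathcal{H})$. Then $$\max\left\{\omega_A\left(\Re_A(S)+iS^{\sharp_A}S\right),\ \omega_A\left(\Im_A(S)+iS^{\sharp_A}S\right)\right\}\le d\omega_A(S)$$ and $$d\omega_A(S)\le\min\left\{\sqrt{\omega_A^2\left(\Re_A(S)+iS^{\sharp_A}S\right)+\|\Im_A(S)\|_A^2},\ \sqrt{\omega_A^2\left(\Im_A(S)+iS^{\sharp_A}S\right)+\|\Re_A(S)\|_A^2}\right\}.$$
   Context: $\mathcal{B}(\mathcal{H})$ denotes the bounded linear operators on $\mathcal{H}$. For positive $A$, $\langle x,z\rangle_A=\langle Ax,z\rangle$ and $\|z\|_A=\|A^{1/2}z\|$. $\mathcal{B}_A(\mathcal{H})$ is the set of $S\in\mathcal{B}(\mathcal{H})$ for which some $R\in\mathcal{B}(\mathcal{H})$ satisfies $AR=S^*A$; for such $S$, $S^{\sharp_A}=A^{\dagger}S^*A$ with $A^\dagger$ the Moore–Penrose inverse of $A$. $\Re_A(S)=\frac{S+S^{\sharp_A}}{2}$ and $\Im_A(S)=\frac{S-S^{\sharp_A}}{2i}$. For operators $T$ bounded with respect to $\|\cdot\|_A$: $\|T\|_A=\sup_{\|z\|_A=1}\|Tz\|_A$, $\omega_A(T)=\sup_{\|z\|_A=1}|\langle Tz,z\rangle_A|$, and $d\omega_A(T)=\sup_{\|z\|_A=1}(|\langle Tz,z\rangle_A|^2+\|Tz\|_A^4)^{1/2}$.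 *)

theory Defs
  imports "HOL-Analysis.Analysis"
begin

class chilbert = banach +
  fixes scaleC :: "complex \<Rightarrow> 'a \<Rightarrow> 'a" (infixr "*\<^sub>C" 75)
    and cinner :: "'a \<Rightarrow> 'a \<Rightarrow> complex"
  assumes scaleC_add_right: "a *\<^sub>C (x + y) = a *\<^sub>C x + a *\<^sub>C y"
    and scaleC_add_left: "(a + b) *\<^sub>C x = a *\<^sub>C x + b *\<^sub>C x"
    and scaleC_scaleC: "a *\<^sub>C (b *\<^sub>C x) = (a * b) *\<^sub>C x"
    and scaleC_one: "1 *\<^sub>C x = x"
    and scaleR_scaleC: "scaleR r x = complex_of_real r *\<^sub>C x"
    and cinner_commute: "cinner x y = cnj (cinner y x)"
    and cinner_add_left: "cinner (x + y) z = cinner x z + cinner y z"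
    and cinner_scaleC_left: "cinner (a *\<^sub>C x) y = a * cinner x y"
    and cinner_self_norm: "cinner x x = complex_of_real ((norm x)\<^sup>2)"

definition bounded_clinear :: "('a::chilbert \<Rightarrow> 'b::chilbert) \<Rightarrow> bool" where
  "bounded_clinear f \<longleftrightarrow>
     (\<forall>x y. f (x + y) = f x + f y) \<and> (\<forall>c x. f (c *\<^sub>C x) = c *\<^sub>C f x) \<and>
     (\<exists>K. \<forall>x. norm (f x) \<le> norm x * K)"

definition positive_op :: "('a::chilbert \<Rightarrow> 'a) \<Rightarrow> bool" where
  "positive_op A \<longleftrightarrow> bounded_clinear A \<and>
     (\<forall>x. Im (cinner (A x) x) = 0 \<and> 0 \<le> Re (cinner (A x) x))"

definition adjoint :: "('a::chilbert \<Rightarrow> 'a) \<Rightarrow> ('a \<Rightarrow> 'a)" where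
  "adjoint S = (SOME T. \<forall>x y. cinner (S x) y = cinner x (T y))"

text \<open>Moore--Penrose inverse of a bounded operator A, defined on
  \<open>R(A) \<oplus> R(A)\<^sup>\<bottom>\<close>: for \<open>y = Aw + z\<close> with \<open>w \<in> N(A)\<^sup>\<bottom>\<close> and \<open>z \<in> R(A)\<^sup>\<bottom>\<close>,
  \<open>A\<^sup>\<dagger> y = w\<close> (values outside this domain are irrelevant).\<close>
definition mp_inverse :: "('a::chilbert \<Rightarrow> 'a) \<Rightarrow> ('a \<Rightarrow> 'a)" where
  "mp_inverse A y = (SOME w. (\<forall>u. A u = 0 \<longrightarrow> cinner w u = 0) \<and>
                          (\<exists>z. (\<forall>u. cinner z (A u) = 0) \<and> y = A w + z))"

definition in_BA :: "('a::chilbert \<Rightarrow> 'a) \<Rightarrow> ('a \<Rightarrow> 'a) \<Rightarrow> bool" where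
  "in_BA A S \<longleftrightarrow> bounded_clinear S \<and>
     (\<exists>R. bounded_clinear R \<and> (\<forall>x. A (R x) = adjoint S (A x)))"

definition A_adjoint :: "('a::chilbert \<Rightarrow> 'a) \<Rightarrow> ('a \<Rightarrow> 'a) \<Rightarrow> ('a \<Rightarrow> 'a)" where
  "A_adjoint A S = (\<lambda>x. mp_inverse A (adjoint S (A x)))"

definition ReA :: "('a::chilbert \<Rightarrow> 'a) \<Rightarrow> ('a \<Rightarrow> 'a) \<Rightarrow> ('a \<Rightarrow> 'a)" where
  "ReA A S = (\<lambda>x. (1/2) *\<^sub>C (S x + A_adjoint A S x))"

definition ImA :: "('a::chilbert \<Rightarrow> 'a) \<Rightarrow> ('a \<Rightarrow> 'a) \<Rightarrow> ('a \<Rightarrow> 'a)" where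
  "ImA A S = (\<lambda>x. (1 / (2 * \<i>)) *\<^sub>C (S x - A_adjoint A S x))"

text \<open>\<open>\<langle>x,z\<rangle>\<^sub>A = \<langle>Ax,z\<rangle>\<close> and \<open>\<parallel>z\<parallel>\<^sub>A = \<parallel>A\<^sup>1\<^sup>/\<^sup>2z\<parallel> = sqrt \<langle>Az,z\<rangle>\<close>.\<close>
definition ainner :: "('a::chilbert \<Rightarrow> 'a) \<Rightarrow> 'a \<Rightarrow> 'a \<Rightarrow> complex" where
  "ainner A x z = cinner (A x) z"

definition anorm :: "('a::chilbert \<Rightarrow> 'a) \<Rightarrow> 'a \<Rightarrow> real" where
  "anorm A z = sqrt (Re (cinner (A z) z))"

text \<open>Suprema over the A-unit sphere (0 is added so that the value is 0 when the sphere is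
  empty, i.e. A = 0; all quantities are nonnegative so this is harmless otherwise).\<close>
definition opnormA :: "('a::chilbert \<Rightarrow> 'a) \<Rightarrow> ('a \<Rightarrow> 'a) \<Rightarrow> real" where
  "opnormA A T = Sup (insert 0 {anorm A (T z) | z. anorm A z = 1})"

definition numradA :: "('a::chilbert \<Rightarrow> 'a) \<Rightarrow> ('a \<Rightarrow> 'a) \<Rightarrow> real" where
  "numradA A T = Sup (insert 0 {cmod (ainner A (T z) z) | z. anorm A z = 1})"

definition dnumradA :: "('a::chilbert \<Rightarrow> 'a) \<Rightarrow> ('a \<Rightarrow> 'a) \<Rightarrow> real" where
  "dnumradA A T = Sup (insert 0
     {sqrt ((cmod (ainner A (T z) z))\<^sup>2 + (anorm A (T z)) ^ 4) | z. anorm A z = 1})"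

end

theory Submission
  imports Defs
begin


lemma scaleC_zero_right[simp]: "a *\<^sub>C (0::'a::chilbert) = 0"
proof -
  have "a *\<^sub>C (0::'a) = a *\<^sub>C 0 + a *\<^sub>C 0" by (metis add.right_neutral scaleC_add_right)
  then show ?thesis by simp
qed

lemma scaleC_zero_left[simp]: "0 *\<^sub>C (x::'a::chilbert) = 0"
  by (metis of_real_0 scaleR_scaleC scaleR_zero_left)

lemma scaleC_minus_left: "(- a) *\<^sub>C (x::'a::chilbert) = - (a *\<^sub>C x)"
  by (metis add.right_inverse add_eq_0_iff scaleC_add_left scaleC_zero_left)

lemma scaleC_minus_right: "a *\<^sub>C (- x::'a::chilbert) = - (a *\<^sub>C x)"
  by (metis add.right_inverse add_eq_0_iff scaleC_add_right scaleC_zero_right)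

lemma scaleC_diff_right: "a *\<^sub>C (x - y::'a::chilbert) = a *\<^sub>C x - a *\<^sub>C y"
  by (metis diff_conv_add_uminus scaleC_add_right scaleC_minus_right)

lemma scaleC_diff_left: "(a - b) *\<^sub>C (x::'a::chilbert) = a *\<^sub>C x - b *\<^sub>C x"
  by (metis diff_conv_add_uminus scaleC_add_left scaleC_minus_left)

lemma cinner_zero_left[simp]: "cinner (0::'a::chilbert) y = 0"
  by (metis add_cancel_right_right add_0 cinner_add_left)

lemma cinner_minus_left: "cinner (- x::'a::chilbert) y = - cinner x y"
  by (metis add.right_inverse add_eq_0_iff cinner_add_left cinner_zero_left)

lemma cinner_diff_left: "cinner (x - y::'a::chilbert) z = cinner x z - cinner y z"
  by (metis cinner_add_left cinner_minus_left diff_conv_add_uminus)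

lemma cinner_add_right: "cinner (x::'a::chilbert) (y + z) = cinner x y + cinner x z"
  by (metis cinner_add_left cinner_commute complex_cnj_add)

lemma cinner_diff_right: "cinner (x::'a::chilbert) (y - z) = cinner x y - cinner x z"
  by (metis cinner_commute cinner_diff_left complex_cnj_diff)

lemma cinner_zero_right[simp]: "cinner (x::'a::chilbert) 0 = 0"
  by (metis cinner_commute cinner_zero_left complex_cnj_zero)

lemma cinner_scaleC_right: "cinner (x::'a::chilbert) (a *\<^sub>C y) = cnj a * cinner x y"
  by (metis cinner_commute cinner_scaleC_left complex_cnj_mult)

lemmas cinner_simps = cinner_add_left cinner_add_right cinner_diff_left cinner_diff_right
  cinner_scaleC_left cinner_scaleC_right cinner_minus_left

lemma norm_sq_cinner: "(norm (x::'a::chilbert))\<^sup>2 = Re (cinner x x)"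
  by (simp add: cinner_self_norm)

lemma cinner_self_Im[simp]: "Im (cinner (x::'a::chilbert) x) = 0"
  by (simp add: cinner_self_norm)

lemma cinner_self_eq0: "cinner (x::'a::chilbert) x = 0 \<longleftrightarrow> x = 0"
  by (simp add: cinner_self_norm)

lemma norm_scaleC: "norm (a *\<^sub>C (x::'a::chilbert)) = cmod a * norm x"
proof -
  have "(norm (a *\<^sub>C x))\<^sup>2 = (cmod a * norm x)\<^sup>2"
  proof -
    have "cinner (a *\<^sub>C x) (a *\<^sub>C x) = (a * cnj a) * cinner x x"
      by (simp add: cinner_simps)
    also have "\<dots> = complex_of_real ((cmod a * norm x)\<^sup>2)"
      by (simp add: complex_norm_square[symmetric] cinner_self_norm power_mult_distrib)
    finally show ?thesis by (simp add: norm_sq_cinner)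
  qed
  then show ?thesis by (simp add: power2_eq_iff_nonneg)
qed



lemma bcl_add: "bounded_clinear f \<Longrightarrow> f (x + y) = f x + f y"
  by (simp add: bounded_clinear_def)
lemma bcl_scale: "bounded_clinear f \<Longrightarrow> f (c *\<^sub>C x) = c *\<^sub>C f x"
  by (simp add: bounded_clinear_def)
lemma bcl_zero: "bounded_clinear (f::'a::chilbert\<Rightarrow>'b::chilbert) \<Longrightarrow> f 0 = 0"
  by (metis bcl_scale scaleC_zero_left)
lemma bcl_minus: "bounded_clinear (f::'a::chilbert\<Rightarrow>'b::chilbert) \<Longrightarrow> f (- x) = - f x"
  by (metis add.right_inverse add_eq_0_iff bcl_add bcl_zero)
lemma bcl_diff: "bounded_clinear (f::'a::chilbert\<Rightarrow>'b::chilbert) \<Longrightarrow> f (x - y) = f x - f y"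
  using bcl_add[of f x "- y"] bcl_minus[of f y] by simp
lemma bcl_bound: "bounded_clinear f \<Longrightarrow> \<exists>K\<ge>0. \<forall>x. norm (f x) \<le> norm x * K"
proof -
  assume "bounded_clinear f"
  then obtain K where K: "\<forall>x. norm (f x) \<le> norm x * K" by (auto simp: bounded_clinear_def)
  have "\<forall>x. norm (f x) \<le> norm x * max K 0"
    by (metis K max.cobounded1 mult_left_mono norm_ge_zero order_trans)
  then show ?thesis by (intro exI[of _ "max K 0"]) auto
qed

lemma pos_bcl: "positive_op A \<Longrightarrow> bounded_clinear A"
  by (simp add: positive_op_def)
lemma pos_Im: "positive_op A \<Longrightarrow> Im (cinner (A x) x) = 0"
  by (simp add: positive_op_def)
lemma pos_Re: "positive_op A \<Longrightarrow> 0 \<le> Re (cinner (A x) x)"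
  by (simp add: positive_op_def)

lemma pos_real: "positive_op A \<Longrightarrow> cinner (A x) x = complex_of_real (Re (cinner (A x) x))"
  by (metis complex_is_Real_iff of_real_Re pos_Im)

lemma bcl_quad:
  assumes L: "bounded_clinear (A::'a::chilbert \<Rightarrow> 'a)"
  shows "cinner (A (x + c *\<^sub>C y)) (x + c *\<^sub>C y) = cinner (A x) x + cnj c * cinner (A x) y + c * cinner (A y) x + c * cnj c * cinner (A y) y"
  by (simp add: bcl_add[OF L] bcl_scale[OF L] cinner_simps algebra_simps)

lemma pos_herm:
  fixes A :: "'a::chilbert \<Rightarrow> 'a"
  assumes A: "positive_op A"
  shows "cinner (A y) x = cnj (cinner (A x) y)"
proof -
  have L: "bounded_clinear A" using A by (rule pos_bcl)
  have "Im (cinner (A (x + 1 *\<^sub>C y)) (x + 1 *\<^sub>C y)) = 0" by (rule pos_Im[OF A])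
  then have h1: "Im (cinner (A x) y) + Im (cinner (A y) x) = 0"
    unfolding bcl_quad[OF L] by (simp add: pos_Im[OF A])
  have "Im (cinner (A (x + \<i> *\<^sub>C y)) (x + \<i> *\<^sub>C y)) = 0" by (rule pos_Im[OF A])
  then have h2: "Re (cinner (A y) x) - Re (cinner (A x) y) = 0"
    unfolding bcl_quad[OF L] by (simp add: pos_Im[OF A])
  show ?thesis using h1 h2 by (simp add: complex_eq_iff)
qed

lemma pos_sym:
  fixes A :: "'a::chilbert \<Rightarrow> 'a"
  assumes A: "positive_op A"
  shows "cinner (A x) y = cinner x (A y)"
  using pos_herm[OF A, of y x] cinner_commute[of x "A y"] by simp



lemma anorm_nonneg: assumes A: "positive_op A" shows "0 \<le> anorm A x" by (simp add: anorm_def pos_Re[OF A])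

lemma anorm_sq: assumes A: "positive_op A" shows "(anorm A x)\<^sup>2 = Re (cinner (A x) x)"
  by (simp add: anorm_def pos_Re[OF A])

lemma ACS_quad:
  fixes A :: "'a::chilbert \<Rightarrow> 'a"
  assumes A: "positive_op A"
  shows "Re (cinner (A (x + (- (complex_of_real r * cinner (A x) y)) *\<^sub>C y)) (x + (- (complex_of_real r * cinner (A x) y)) *\<^sub>C y))
     = Re (cinner (A x) x) - 2 * r * (cmod (cinner (A x) y))\<^sup>2 + r\<^sup>2 * (cmod (cinner (A x) y))\<^sup>2 * Re (cinner (A y) y)"
proof -
  have L: "bounded_clinear A" using A by (rule pos_bcl)
  define c where "c = cinner (A x) y"
  have cc: "c * cnj c = complex_of_real ((cmod c)\<^sup>2)" by (metis complex_norm_square of_real_power)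
  have yy: "cinner (A y) y = complex_of_real (Re (cinner (A y) y))" by (rule pos_real[OF A])
  show ?thesis
    unfolding bcl_quad[OF L] pos_herm[OF A, of y x] c_def[symmetric]
    apply (subst yy)
    apply (simp add: algebra_simps)
    apply (simp add: cc mult.assoc[symmetric] power2_eq_square)
    using cmod_power2[of c] unfolding power2_eq_square by algebra
qed

lemma ACS:
  fixes A :: "'a::chilbert \<Rightarrow> 'a"
  assumes A: "positive_op A"
  shows "cmod (cinner (A x) y) \<le> anorm A x * anorm A y"
proof -
  define a where "a = Re (cinner (A x) x)"
  define b where "b = Re (cinner (A y) y)"
  define k where "k = (cmod (cinner (A x) y))\<^sup>2"
  have a0: "0 \<le> a" "0 \<le> b" using pos_Re[OF A] by (auto simp: a_def b_def)
  have k0: "0 \<le> k" by (simp add: k_def)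
  have Q: "0 \<le> a - 2 * r * k + r\<^sup>2 * k * b" for r
    using ACS_quad[OF A, of x r y] pos_Re[OF A] unfolding a_def b_def k_def by metis
  have "k \<le> a * b"
  proof (cases "b = 0")
    case True
    show ?thesis
    proof (rule ccontr)
      assume "\<not> k \<le> a * b"
      then have "k > 0" using True by simp
      have "0 \<le> a - 2 * ((a + 1) / (2 * k)) * k" using Q[of "(a + 1) / (2 * k)"] True by simp
      also have "\<dots> = -1" using \<open>k > 0\<close> by (simp add: field_simps)
      finally show False by simp
    qed
  next
    case False
    then have "b > 0" using a0 by simp
    have "0 \<le> a - 2 * (1/b) * k + (1/b)\<^sup>2 * k * b" by (rule Q)
    also have "\<dots> = a - k / b" using \<open>b > 0\<close> by (simp add: field_simps power2_eq_square)
    finally show ?thesis using \<open>b > 0\<close> by (simp add: field_simps)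
  qed
  then have "sqrt k \<le> sqrt a * sqrt b" by (metis real_sqrt_le_mono real_sqrt_mult)
  then show ?thesis by (simp add: k_def anorm_def a_def b_def)
qed

lemma pos_id: "positive_op (\<lambda>x::'a::chilbert. x)"
  unfolding positive_op_def bounded_clinear_def
proof (intro conjI allI)
  show "\<exists>K. \<forall>x::'a. norm x \<le> norm x * K" by (rule exI[of _ 1]) simp
qed (simp_all add: cinner_self_norm)

lemma anorm_id: "anorm (\<lambda>x::'a::chilbert. x) x = norm x"
  by (simp add: anorm_def cinner_self_norm)

lemma CS: "cmod (cinner x y) \<le> norm x * norm (y::'a::chilbert)"
  using ACS[OF pos_id, of x y] by (simp add: anorm_id)

lemma anorm_scaleC:
  assumes A: "positive_op A"
  shows "anorm A (c *\<^sub>C x) = cmod c * anorm A x"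
proof -
  have L: "bounded_clinear A" using A by (rule pos_bcl)
  have "Re (cinner (A (c *\<^sub>C x)) (c *\<^sub>C x)) = (cmod c)\<^sup>2 * Re (cinner (A x) x)"
  proof -
    have "cinner (A (c *\<^sub>C x)) (c *\<^sub>C x) = (c * cnj c) * cinner (A x) x"
      by (simp add: bcl_scale[OF L] cinner_simps)
    also have "\<dots> = complex_of_real ((cmod c)\<^sup>2) * complex_of_real (Re (cinner (A x) x))"
      by (metis complex_norm_square of_real_power pos_real[OF A])
    finally show ?thesis by (metis Re_complex_of_real of_real_mult)
  qed
  then show ?thesis by (simp add: anorm_def real_sqrt_mult)
qed

lemma bound_A:
  fixes A :: "'a::chilbert \<Rightarrow> 'a"
  assumes A: "positive_op A"
  shows "\<exists>K\<ge>0. \<forall>x. (anorm A x)\<^sup>2 \<le> K * (norm x)\<^sup>2"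
proof -
  obtain K where K: "K \<ge> 0" "\<forall>x. norm (A x) \<le> norm x * K" using bcl_bound[OF pos_bcl[OF A]] by blast
  have "(anorm A x)\<^sup>2 \<le> K * (norm x)\<^sup>2" for x
  proof -
    have "(anorm A x)\<^sup>2 \<le> cmod (cinner (A x) x)" unfolding anorm_sq[OF A] by (rule complex_Re_le_cmod)
    also have "\<dots> \<le> norm (A x) * norm x" by (rule CS)
    also have "\<dots> \<le> norm x * K * norm x" using K by (simp add: mult_right_mono)
    finally show ?thesis by (simp add: power2_eq_square algebra_simps)
  qed
  then show ?thesis using K by blast
qed



lemma cont_lin:
  fixes f :: "'a::chilbert \<Rightarrow> 'b::real_normed_vector"
  assumes add: "\<And>x y. f (x + y) = f x + f y" and bnd: "\<And>x. norm (f x) \<le> norm x * K"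
  shows "continuous_on UNIV f"
  unfolding continuous_on_iff
proof (intro ballI allI impI)
  fix x :: 'a and e :: real assume e: "e > 0"
  have fd: "f x' - f x = f (x' - x)" for x' using add[of "x' - x" x] by simp
  show "\<exists>d>0. \<forall>x'\<in>UNIV. dist x' x < d \<longrightarrow> dist (f x') (f x) < e"
  proof (intro exI[of _ "e / (\<bar>K\<bar> + 1)"] conjI ballI impI)
    show "0 < e / (\<bar>K\<bar> + 1)" using e by simp
    fix x' assume "dist x' x < e / (\<bar>K\<bar> + 1)"
    then have h: "norm (x' - x) * (\<bar>K\<bar> + 1) < e" by (simp add: dist_norm field_simps)
    have "dist (f x') (f x) = norm (f (x' - x))" by (simp add: dist_norm fd)
    also have "\<dots> \<le> norm (x' - x) * K" by (rule bnd)
    also have "\<dots> \<le> norm (x' - x) * (\<bar>K\<bar> + 1)" by (intro mult_left_mono) auto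
    finally show "dist (f x') (f x) < e" using h by simp
  qed
qed

lemma parallelogram:
  "(norm (a + b))\<^sup>2 + (norm (a - b))\<^sup>2 = 2 * (norm a)\<^sup>2 + 2 * (norm (b::'a::chilbert))\<^sup>2"
  by (simp add: norm_sq_cinner cinner_simps)

lemma proj:
  fixes M :: "'a::chilbert set" and u :: 'a
  assumes cl: "closed M" and z: "0 \<in> M" and ad: "\<And>x y. x\<in>M \<Longrightarrow> y\<in>M \<Longrightarrow> x + y \<in> M"
    and sc: "\<And>c x. x\<in>M \<Longrightarrow> c *\<^sub>C x \<in> M"
  shows "\<exists>p\<in>M. \<forall>m\<in>M. cinner (u - p) m = 0"
proof -
  have scR: "r *\<^sub>R x \<in> M" if "x \<in> M" for r x using sc[OF that] by (simp add: scaleR_scaleC)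
  define D where "D = (\<lambda>m. (norm (u - m))\<^sup>2) ` M"
  define d where "d = Inf D"
  have Dne: "D \<noteq> {}" using z by (auto simp: D_def)
  have Dbdd: "bdd_below D" unfolding D_def by (rule bdd_belowI[of _ 0]) auto
  have dle: "d \<le> (norm (u - m))\<^sup>2" if "m \<in> M" for m
    unfolding d_def by (rule cInf_lower) (use that Dbdd in \<open>auto simp: D_def\<close>)
  have "\<exists>m\<in>M. (norm (u - m))\<^sup>2 < d + inverse (real (Suc n))" for n
  proof -
    have "Inf D < d + inverse (real (Suc n))" by (simp add: d_def)
    then show ?thesis using cInf_less_iff[OF Dne Dbdd] by (auto simp: D_def)
  qed
  then obtain mm where mmM: "\<And>n. mm n \<in> M"
    and mmd: "\<And>n. (norm (u - mm n))\<^sup>2 < d + inverse (real (Suc n))" by metis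
  have par: "(norm (mm n - mm k))\<^sup>2 \<le> 2 * inverse (real (Suc n)) + 2 * inverse (real (Suc k))" for n k
  proof -
    define mid where "mid = (1/2) *\<^sub>R (mm n + mm k)"
    have midM: "mid \<in> M" unfolding mid_def by (intro scR ad mmM)
    have e1: "(u - mm n) + (u - mm k) = 2 *\<^sub>R (u - mid)" by (simp add: mid_def algebra_simps scaleR_2)
    have e2: "(u - mm n) - (u - mm k) = - (mm n - mm k)" by simp
    have "(norm ((u - mm n) + (u - mm k)))\<^sup>2 = 4 * (norm (u - mid))\<^sup>2"
      unfolding e1 by (simp add: power2_eq_square)
    then have "(norm ((u - mm n) + (u - mm k)))\<^sup>2 \<ge> 4 * d" using dle[OF midM] by simp
    moreover have "(norm ((u - mm n) + (u - mm k)))\<^sup>2 + (norm (mm n - mm k))\<^sup>2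
        = 2 * (norm (u - mm n))\<^sup>2 + 2 * (norm (u - mm k))\<^sup>2"
      using parallelogram[of "u - mm n" "u - mm k"] unfolding e2 norm_minus_cancel .
    ultimately show ?thesis using mmd[of n] mmd[of k] by linarith
  qed
  have "Cauchy mm"
    unfolding Cauchy_def
  proof (intro allI impI)
    fix e :: real assume e: "e > 0"
    then obtain N where N: "inverse (real (Suc N)) < e\<^sup>2 / 4" using reals_Archimedean[of "e\<^sup>2/4"] by auto
    show "\<exists>N. \<forall>m\<ge>N. \<forall>n\<ge>N. dist (mm m) (mm n) < e"
    proof (intro exI[of _ N] allI impI)
      fix m n assume mn: "m \<ge> N" "n \<ge> N"
      have i1: "inverse (real (Suc m)) \<le> inverse (real (Suc N))" using mn by (simp add: le_imp_inverse_le)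
      have i2: "inverse (real (Suc n)) \<le> inverse (real (Suc N))" using mn by (simp add: le_imp_inverse_le)
      have "(dist (mm m) (mm n))\<^sup>2 < e\<^sup>2" using par[of m n] i1 i2 N unfolding dist_norm by linarith
      then show "dist (mm m) (mm n) < e" using e by (simp add: power_less_imp_less_base)
    qed
  qed
  then obtain p where p: "mm \<longlonglongrightarrow> p" using Cauchy_convergent_iff convergent_def by blast
  have pM: "p \<in> M" by (rule closed_sequentially[OF cl mmM p])
  have "(\<lambda>n. (norm (u - mm n))\<^sup>2) \<longlonglongrightarrow> (norm (u - p))\<^sup>2" by (intro tendsto_intros p)
  moreover have "(\<lambda>n. d + inverse (real (Suc n))) \<longlonglongrightarrow> d + 0"
    by (intro tendsto_intros LIMSEQ_inverse_real_of_nat)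
  ultimately have pd: "(norm (u - p))\<^sup>2 \<le> d"
    using LIMSEQ_le[of "\<lambda>n. (norm (u - mm n))\<^sup>2" _ "\<lambda>n. d + inverse (real (Suc n))"] mmd
    by (simp add: less_imp_le)
  show ?thesis
  proof (intro bexI[OF _ pM] ballI)
    fix m assume mM: "m \<in> M"
    define w where "w = u - p"
    define c where "c = cinner w m"
    define r where "r = inverse ((norm m)\<^sup>2 + 1)"
    have r0: "r > 0" unfolding r_def by (intro positive_imp_inverse_positive add_nonneg_pos) auto
    have r1: "r * (norm m)\<^sup>2 < 1"
    proof -
      have "0 < 1 + (norm m)\<^sup>2" by (intro add_pos_nonneg) auto
      then show ?thesis unfolding r_def by (simp add: field_simps)
    qed
    have qM: "p + (complex_of_real r * c) *\<^sub>C m \<in> M" by (intro ad pM sc mM)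
    have eqv: "w + (- (complex_of_real r * cinner w m)) *\<^sub>C m = u - (p + (complex_of_real r * c) *\<^sub>C m)"
      by (simp add: w_def c_def scaleC_minus_left)
    have "Re (cinner (w + (- (complex_of_real r * cinner w m)) *\<^sub>C m) (w + (- (complex_of_real r * cinner w m)) *\<^sub>C m))
      = Re (cinner w w) - 2 * r * (cmod c)\<^sup>2 + r\<^sup>2 * (cmod c)\<^sup>2 * Re (cinner m m)"
      using ACS_quad[OF pos_id, of w r m] by (simp add: c_def)
    then have "(norm (u - (p + (complex_of_real r * c) *\<^sub>C m)))\<^sup>2 = (norm w)\<^sup>2 - 2 * r * (cmod c)\<^sup>2 + r\<^sup>2 * (cmod c)\<^sup>2 * (norm m)\<^sup>2"
      unfolding eqv by (simp add: norm_sq_cinner)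
    moreover have "(norm w)\<^sup>2 \<le> (norm (u - (p + (complex_of_real r * c) *\<^sub>C m)))\<^sup>2"
      using pd dle[OF qM] unfolding w_def by linarith
    ultimately have "0 \<le> r * (cmod c)\<^sup>2 * (r * (norm m)\<^sup>2 - 2)" by (simp add: algebra_simps power2_eq_square)
    moreover have "r * (norm m)\<^sup>2 - 2 < 0" using r1 by simp
    ultimately have "r * (cmod c)\<^sup>2 \<le> 0"
      using mult_pos_neg[of "r * (cmod c)\<^sup>2" "r * (norm m)\<^sup>2 - 2"] by linarith
    then have "(cmod c)\<^sup>2 \<le> 0" using r0 by (simp add: mult_le_0_iff)
    then show "cinner (u - p) m = 0" by (simp add: c_def w_def)
  qed
qed



lemma riesz:
  fixes f :: "'a::chilbert \<Rightarrow> complex"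
  assumes add: "\<And>x y. f (x + y) = f x + f y" and sc: "\<And>c x. f (c *\<^sub>C x) = c * f x"
    and bnd: "\<And>x. norm (f x) \<le> norm x * K"
  shows "\<exists>v. \<forall>x. f x = cinner x v"
proof (cases "\<forall>x. f x = 0")
  case True then show ?thesis by (intro exI[of _ 0]) simp
next
  case False
  then obtain u where fu: "f u \<noteq> 0" by blast
  have f0: "f 0 = 0" using sc[of 0 0] by simp
  have fdiff: "f (x - y) = f x - f y" for x y using add[of "x - y" y] by simp
  have cl: "closed {x. f x = 0}"
    using closed_Collect_eq[OF cont_lin[of f K, OF add bnd] continuous_on_const] .
  obtain p where pN: "f p = 0" and orth: "\<And>m. f m = 0 \<Longrightarrow> cinner (u - p) m = 0"
    using proj[OF cl, of u] f0 add sc by auto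
  define w where "w = u - p"
  have fw: "f w = f u" using fdiff pN by (simp add: w_def)
  have ww: "cinner w w \<noteq> 0"
  proof
    assume "cinner w w = 0"
    then have "w = 0" by (simp add: cinner_self_eq0)
    then show False using fw fu f0 by simp
  qed
  define v where "v = (cnj (f w) / cnj (cinner w w)) *\<^sub>C w"
  show ?thesis
  proof (intro exI[of _ v] allI)
    fix x
    have "f (f x *\<^sub>C w - f w *\<^sub>C x) = 0" by (simp add: fdiff sc)
    then have "cinner (f x *\<^sub>C w - f w *\<^sub>C x) w = 0" by (metis cinner_commute complex_cnj_zero orth w_def)
    then have e: "f x * cinner w w = f w * cinner x w" by (simp add: cinner_simps)
    have "cinner x v = f w / cinner w w * cinner x w" by (simp add: v_def cinner_simps)
    also have "\<dots> = f x" using e ww by (simp add: field_simps)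
    finally show "f x = cinner x v" by simp
  qed
qed

lemma adjoint_prop:
  fixes S :: "'a::chilbert \<Rightarrow> 'a"
  assumes S: "bounded_clinear S"
  shows "cinner (S x) y = cinner x (adjoint S y)"
proof -
  obtain K where K: "K \<ge> 0" "\<And>x. norm (S x) \<le> norm x * K" using bcl_bound[OF S] by blast
  have "\<exists>v. \<forall>x. cinner (S x) y = cinner x v" for y
  proof (rule riesz[where K = "K * norm y"])
    show "cinner (S (a + b)) y = cinner (S a) y + cinner (S b) y" for a b by (simp add: bcl_add[OF S] cinner_simps)
    show "cinner (S (c *\<^sub>C a)) y = c * cinner (S a) y" for c a by (simp add: bcl_scale[OF S] cinner_simps)
    show "norm (cinner (S a) y) \<le> norm a * (K * norm y)" for a
    proof -
      have "norm (cinner (S a) y) \<le> norm (S a) * norm y" by (rule CS)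
      also have "\<dots> \<le> norm a * K * norm y" using K by (simp add: mult_right_mono)
      finally show ?thesis by (simp add: mult.assoc)
    qed
  qed
  then have "\<exists>T. \<forall>x y. cinner (S x) y = cinner x (T y)" by metis
  then have "\<forall>x y. cinner (S x) y = cinner x (adjoint S y)"
    unfolding adjoint_def by (rule someI_ex)
  then show ?thesis by blast
qed

lemma mp_inverse_range:
  fixes A :: "'a::chilbert \<Rightarrow> 'a"
  assumes A: "positive_op A"
  shows "A (mp_inverse A (A r)) = A r"
proof -
  have L: "bounded_clinear A" using A by (rule pos_bcl)
  obtain K where K: "\<And>x. norm (A x) \<le> norm x * K" using bcl_bound[OF L] by blast
  have cl: "closed {x. A x = 0}"
    using closed_Collect_eq[OF cont_lin[of A K, OF bcl_add[OF L] K] continuous_on_const] .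
  obtain p where pN: "A p = 0" and orth: "\<And>m. A m = 0 \<Longrightarrow> cinner (r - p) m = 0"
    using proj[OF cl, of r] bcl_zero[OF L] bcl_add[OF L] bcl_scale[OF L] by auto
  let ?P = "\<lambda>w. (\<forall>u. A u = 0 \<longrightarrow> cinner w u = 0) \<and> (\<exists>z. (\<forall>u. cinner z (A u) = 0) \<and> A r = A w + z)"
  have "?P (r - p)" using orth pN by (auto simp: bcl_diff[OF L] intro: exI[of _ 0])
  then have "?P (mp_inverse A (A r))" unfolding mp_inverse_def by (rule someI)
  then obtain z where z: "\<forall>u. cinner z (A u) = 0" and e: "A r = A (mp_inverse A (A r)) + z" by blast
  have "z = A (r - mp_inverse A (A r))" by (metis add_diff_cancel_left' bcl_diff[OF L] e)
  then have "cinner z z = 0" using z by metis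
  then have "z = 0" by (simp add: cinner_self_eq0)
  then show ?thesis using e by simp
qed

lemma inBA_R:
  assumes "in_BA A S"
  obtains R where "bounded_clinear R" "\<And>x. A (R x) = adjoint S (A x)"
  using assms unfolding in_BA_def by blast

lemma key_T:
  fixes A S :: "'a::chilbert \<Rightarrow> 'a"
  assumes A: "positive_op A" and B: "in_BA A S"
  shows "A (A_adjoint A S x) = adjoint S (A x)"
proof -
  obtain R where R: "bounded_clinear R" "\<And>x. A (R x) = adjoint S (A x)" using inBA_R[OF B] by blast
  show ?thesis unfolding A_adjoint_def R(2)[symmetric] by (rule mp_inverse_range[OF A])
qed

lemma adj_form:
  fixes A S X :: "'a::chilbert \<Rightarrow> 'a"
  assumes S: "bounded_clinear S" and X: "A (X u) = adjoint S (A u)"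
  shows "cinner (A (X u)) y = cinner (A u) (S y)"
proof -
  have "cinner (A (X u)) y = cnj (cinner y (adjoint S (A u)))" by (simp add: X cinner_commute[of _ y])
  also have "\<dots> = cnj (cinner (S y) (A u))" by (simp add: adjoint_prop[OF S])
  also have "\<dots> = cinner (A u) (S y)" by (simp add: cinner_commute[of "A u"])
  finally show ?thesis .
qed



lemma pow_bound:
  fixes b M C :: real
  assumes b: "0 \<le> b" and M: "0 \<le> M" and h: "\<And>k. b ^ (2 ^ k) \<le> C * M ^ (2 ^ k)"
  shows "b \<le> M"
proof (rule ccontr)
  assume "\<not> b \<le> M"
  then have bM: "M < b" by simp
  show False
  proof (cases "M = 0")
    case True
    then show False using h[of 0] bM by simp
  next
    case False
    then have M0: "M > 0" using M by simp
    define q where "q = b / M"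
    have q1: "1 < q" using bM M0 by (simp add: q_def)
    obtain n where n: "C < q ^ n" using real_arch_pow[OF q1] by blast
    have "q ^ n \<le> q ^ (2 ^ n)" using q1 by (intro power_increasing) (simp_all add: less_imp_le)
    moreover have "q ^ (2 ^ n) \<le> C"
    proof -
      have "b ^ (2 ^ n) = q ^ (2 ^ n) * M ^ (2 ^ n)" using M0 by (simp add: q_def power_divide)
      then show ?thesis using h[of n] M0 by simp
    qed
    ultimately show False using n by simp
  qed
qed

lemma funpow_bound:
  fixes Q :: "'a::chilbert \<Rightarrow> 'a"
  assumes K: "\<And>x. norm (Q x) \<le> norm x * K" "0 \<le> K"
  shows "norm ((Q ^^ n) x) \<le> K ^ n * norm x"
proof (induction n)
  case 0 then show ?case by simp
next
  case (Suc n)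
  have "norm ((Q ^^ Suc n) x) \<le> norm ((Q ^^ n) x) * K" using K(1) by simp
  also have "\<dots> \<le> K ^ n * norm x * K" using Suc K(2) by (simp add: mult_right_mono)
  finally show ?case by (simp add: algebra_simps)
qed

lemma S_bounded:
  fixes A S :: "'a::chilbert \<Rightarrow> 'a"
  assumes A: "positive_op A" and B: "in_BA A S"
  shows "\<exists>C\<ge>0. \<forall>u. anorm A (S u) \<le> C * anorm A u"
proof -
  have S: "bounded_clinear S" using B by (simp add: in_BA_def)
  obtain R where R: "bounded_clinear R" "\<And>x. A (R x) = adjoint S (A x)" using inBA_R[OF B] by blast
  obtain KS where KS: "KS \<ge> 0" "\<And>x. norm (S x) \<le> norm x * KS" using bcl_bound[OF S] by blast
  obtain KR where KR: "KR \<ge> 0" "\<And>x. norm (R x) \<le> norm x * KR" using bcl_bound[OF R(1)] by blast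
  obtain KA where KA: "KA \<ge> 0" "\<And>x. (anorm A x)\<^sup>2 \<le> KA * (norm x)\<^sup>2" using bound_A[OF A] by blast
  define Q where "Q = (\<lambda>x. R (S x))"
  define KQ where "KQ = KS * KR"
  have KQ0: "KQ \<ge> 0" using KS KR by (simp add: KQ_def)
  have KQ: "norm (Q x) \<le> norm x * KQ" for x
  proof -
    have "norm (Q x) \<le> norm (S x) * KR" by (simp add: Q_def KR)
    also have "\<dots> \<le> norm x * KS * KR" using KS KR by (simp add: mult_right_mono)
    finally show ?thesis by (simp add: KQ_def mult.assoc)
  qed
  have Q1: "cinner (A (Q u)) y = cinner (A (S u)) (S y)" for u y
    unfolding Q_def by (rule adj_form[where X = R, OF S R(2)[of "S u"]])
  have Q2: "cinner (A (Q u)) y = cinner (A u) (Q y)" for u y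
  proof -
    have "cinner (A (Q u)) y = cinner (A (S u)) (S y)" by (rule Q1)
    also have "\<dots> = cnj (cinner (A (S y)) (S u))" by (rule pos_herm[OF A])
    also have "\<dots> = cnj (cinner (A (Q y)) u)" by (simp add: Q1)
    also have "\<dots> = cinner (A u) (Q y)" by (simp add: pos_herm[OF A, of u "Q y"])
    finally show ?thesis .
  qed
  have Q3: "cinner (A ((Q ^^ n) u)) y = cinner (A u) ((Q ^^ n) y)" for n u y
  proof (induction n arbitrary: y)
    case 0 then show ?case by simp
  next
    case (Suc n)
    have "cinner (A ((Q ^^ Suc n) u)) y = cinner (A (Q ((Q ^^ n) u))) y" by simp
    also have "\<dots> = cinner (A ((Q ^^ n) u)) (Q y)" by (rule Q2)
    also have "\<dots> = cinner (A u) ((Q ^^ n) (Q y))" by (rule Suc)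
    also have "\<dots> = cinner (A u) ((Q ^^ Suc n) y)" by (simp only: funpow_Suc_right comp_def)
    finally show ?case .
  qed
  have Q4: "(anorm A ((Q ^^ m) u))\<^sup>2 \<le> anorm A ((Q ^^ (m + m)) u) * anorm A u" for m u
  proof -
    have "(anorm A ((Q ^^ m) u))\<^sup>2 = Re (cinner (A ((Q ^^ m) u)) ((Q ^^ m) u))" by (rule anorm_sq[OF A])
    also have "\<dots> = Re (cinner (A ((Q ^^ m) ((Q ^^ m) u))) u)" by (simp add: Q3)
    also have "\<dots> = Re (cinner (A ((Q ^^ (m + m)) u)) u)" by (simp add: funpow_add)
    also have "\<dots> \<le> cmod (cinner (A ((Q ^^ (m + m)) u)) u)" by (rule complex_Re_le_cmod)
    also have "\<dots> \<le> anorm A ((Q ^^ (m + m)) u) * anorm A u" by (rule ACS[OF A])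
    finally show ?thesis .
  qed
  have unit: "anorm A (Q x) \<le> KQ" if x1: "anorm A x = 1" for x
  proof -
    define a where "a k = anorm A ((Q ^^ (2 ^ k)) x)" for k
    have a0: "a k \<ge> 0" for k by (simp add: a_def anorm_nonneg[OF A])
    have aS: "(a k)\<^sup>2 \<le> a (Suc k)" for k
      using Q4[of "2 ^ k" x] x1 by (simp add: a_def mult_2)
    have ap: "a 0 ^ (2 ^ k) \<le> a k" for k
    proof (induction k)
      case 0 then show ?case by simp
    next
      case (Suc k)
      have "a 0 ^ (2 ^ Suc k) = (a 0 ^ (2 ^ k))\<^sup>2" by (simp add: power_mult[symmetric] mult.commute)
      also have "\<dots> \<le> (a k)\<^sup>2" using Suc a0[of 0] by (intro power_mono) simp_all
      also have "\<dots> \<le> a (Suc k)" by (rule aS)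
      finally show ?case .
    qed
    have ab: "(a k)\<^sup>2 \<le> (KA * (norm x)\<^sup>2) * (KQ\<^sup>2) ^ (2 ^ k)" for k
    proof -
      have "(a k)\<^sup>2 \<le> KA * (norm ((Q ^^ (2 ^ k)) x))\<^sup>2" unfolding a_def by (rule KA(2))
      also have "\<dots> \<le> KA * (KQ ^ (2 ^ k) * norm x)\<^sup>2"
        using funpow_bound[of Q KQ "2 ^ k" x, OF KQ KQ0] KA(1)
        by (intro mult_left_mono power_mono) simp_all
      finally show ?thesis by (simp add: power_mult_distrib power_mult[symmetric] mult.commute mult.left_commute)
    qed
    have "(a 0)\<^sup>2 \<le> KQ\<^sup>2"
    proof (rule pow_bound[where C = "KA * (norm x)\<^sup>2"])
      show "((a 0)\<^sup>2) ^ (2 ^ k) \<le> (KA * (norm x)\<^sup>2) * (KQ\<^sup>2) ^ (2 ^ k)" for k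
      proof -
        have "((a 0)\<^sup>2) ^ (2 ^ k) = (a 0 ^ (2 ^ k))\<^sup>2" by (simp add: power_mult[symmetric] mult.commute)
        also have "\<dots> \<le> (a k)\<^sup>2" using ap[of k] a0[of 0] by (intro power_mono) simp_all
        also have "\<dots> \<le> (KA * (norm x)\<^sup>2) * (KQ\<^sup>2) ^ (2 ^ k)" by (rule ab)
        finally show ?thesis .
      qed
    qed simp_all
    then have "a 0 \<le> KQ" using a0[of 0] KQ0 by (simp add: power2_le_iff_abs_le)
    then show ?thesis by (simp add: a_def)
  qed
  have Ssq: "(anorm A (S u))\<^sup>2 \<le> anorm A (Q u) * anorm A u" for u
  proof -
    have "(anorm A (S u))\<^sup>2 = Re (cinner (A (S u)) (S u))" by (rule anorm_sq[OF A])
    also have "\<dots> = Re (cinner (A (Q u)) u)" by (simp add: Q1)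
    also have "\<dots> \<le> cmod (cinner (A (Q u)) u)" by (rule complex_Re_le_cmod)
    also have "\<dots> \<le> anorm A (Q u) * anorm A u" by (rule ACS[OF A])
    finally show ?thesis .
  qed
  have "anorm A (S u) \<le> sqrt KQ * anorm A u" for u
  proof (cases "anorm A u = 0")
    case True
    then have "(anorm A (S u))\<^sup>2 \<le> 0" using Ssq[of u] by simp
    then show ?thesis using True by simp
  next
    case False
    then have pos: "anorm A u > 0" using anorm_nonneg[OF A, of u] by simp
    define c where "c = complex_of_real (1 / anorm A u)"
    have cm: "cmod c = 1 / anorm A u" unfolding c_def norm_of_real using pos by simp
    have x1: "anorm A (c *\<^sub>C u) = 1" using pos by (simp add: anorm_scaleC[OF A] cm)
    have "(anorm A (S (c *\<^sub>C u)))\<^sup>2 \<le> KQ"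
      using Ssq[of "c *\<^sub>C u"] unit[OF x1] x1 by simp
    then have "anorm A (S (c *\<^sub>C u)) \<le> sqrt KQ" using real_le_rsqrt by blast
    then have "anorm A (S u) / anorm A u \<le> sqrt KQ"
      by (simp add: bcl_scale[OF S] anorm_scaleC[OF A] cm)
    then show ?thesis using pos by (simp add: field_simps)
  qed
  then show ?thesis using KQ0 by (intro exI[of _ "sqrt KQ"]) auto
qed



lemma anorm_triangle:
  fixes A :: "'a::chilbert \<Rightarrow> 'a"
  assumes A: "positive_op A"
  shows "anorm A (x + y) \<le> anorm A x + anorm A y"
proof -
  have L: "bounded_clinear A" using A by (rule pos_bcl)
  define p where "p = cinner (A x) y"
  have "(anorm A (x + y))\<^sup>2 = Re (cinner (A (x + 1 *\<^sub>C y)) (x + 1 *\<^sub>C y))"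
    by (simp add: anorm_sq[OF A] scaleC_one)
  also have "\<dots> = (anorm A x)\<^sup>2 + 2 * Re p + (anorm A y)\<^sup>2"
    unfolding bcl_quad[OF L] pos_herm[OF A, of y x] by (simp add: anorm_sq[OF A] p_def)
  also have "\<dots> \<le> (anorm A x)\<^sup>2 + 2 * (anorm A x * anorm A y) + (anorm A y)\<^sup>2"
    using complex_Re_le_cmod[of p] ACS[OF A, of x y] by (simp add: p_def)
  also have "\<dots> = (anorm A x + anorm A y)\<^sup>2" by (simp add: power2_eq_square algebra_simps)
  finally have sq: "(anorm A (x + y))\<^sup>2 \<le> (anorm A x + anorm A y)\<^sup>2" .
  have "0 \<le> anorm A x + anorm A y" using anorm_nonneg[OF A, of x] anorm_nonneg[OF A, of y] by simp
  then show ?thesis by (rule power2_le_imp_le[OF sq])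
qed

lemma sup_upper0: "x \<in> X \<Longrightarrow> bdd_above (insert (0::real) X) \<Longrightarrow> x \<le> Sup (insert 0 X)"
  by (rule cSup_upper) auto

lemma sup_ge0: "bdd_above (insert (0::real) X) \<Longrightarrow> 0 \<le> Sup (insert 0 X)"
  by (rule cSup_upper) auto

context
  fixes A S :: "'a::chilbert \<Rightarrow> 'a"
  assumes A: "positive_op A" and B: "in_BA A S"
begin

private lemma L: "bounded_clinear A" using A by (rule pos_bcl)
private lemma S: "bounded_clinear S" using B by (simp add: in_BA_def)

private lemma KT: "cinner (A (A_adjoint A S u)) y = cinner (A u) (S y)"
  by (rule adj_form[where X = "A_adjoint A S", OF S key_T[OF A B, of u]])

private definition "CC = (SOME C. C \<ge> 0 \<and> (\<forall>u. anorm A (S u) \<le> C * anorm A u))"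

private lemma CC: "CC \<ge> 0" "anorm A (S u) \<le> CC * anorm A u"
proof -
  have "CC \<ge> 0 \<and> (\<forall>u. anorm A (S u) \<le> CC * anorm A u)"
    unfolding CC_def using S_bounded[OF A B] by (rule someI_ex) 
  then show "CC \<ge> 0" "anorm A (S u) \<le> CC * anorm A u" by auto
qed

private lemma Tb: "anorm A (A_adjoint A S u) \<le> CC * anorm A u"
proof -
  let ?t = "A_adjoint A S u"
  have "(anorm A ?t)\<^sup>2 = Re (cinner (A ?t) ?t)" by (rule anorm_sq[OF A])
  also have "\<dots> = Re (cinner (A u) (S ?t))" by (simp add: KT)
  also have "\<dots> \<le> cmod (cinner (A u) (S ?t))" by (rule complex_Re_le_cmod)
  also have "\<dots> \<le> anorm A u * anorm A (S ?t)" by (rule ACS[OF A])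
  also have "\<dots> \<le> anorm A u * (CC * anorm A ?t)" using anorm_nonneg[OF A, of u] CC(2)
    by (intro mult_left_mono) simp_all
  finally have h: "anorm A ?t * anorm A ?t \<le> (CC * anorm A u) * anorm A ?t"
    by (simp add: power2_eq_square algebra_simps)
  show ?thesis
  proof (cases "anorm A ?t = 0")
    case True then show ?thesis using CC(1) anorm_nonneg[OF A, of u] by simp
  next
    case False
    then have "anorm A ?t > 0" using anorm_nonneg[OF A, of ?t] by simp
    then show ?thesis using h by simp
  qed
qed

private lemma PT1: "cinner (A (A_adjoint A S z)) z = cnj (cinner (A (S z)) z)"
  by (simp add: KT pos_herm[OF A, of z "S z"])

private lemma PT2: "cinner (A (A_adjoint A S (S z))) z = complex_of_real ((anorm A (S z))\<^sup>2)"
  by (simp add: KT anorm_sq[OF A] pos_real[OF A, symmetric])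

private lemma PX1: "ainner A (ReA A S z + \<i> *\<^sub>C A_adjoint A S (S z)) z
   = Complex (Re (cinner (A (S z)) z)) ((anorm A (S z))\<^sup>2)"
  by (simp add: ainner_def ReA_def bcl_add[OF L] bcl_scale[OF L] cinner_simps PT1 PT2 complex_eq_iff)

private lemma PX2: "ainner A (ImA A S z + \<i> *\<^sub>C A_adjoint A S (S z)) z
   = Complex (Im (cinner (A (S z)) z)) ((anorm A (S z))\<^sup>2)"
  by (simp add: ainner_def ImA_def bcl_add[OF L] bcl_scale[OF L] bcl_diff[OF L] cinner_simps PT1 PT2 complex_eq_iff)

private lemma PIm: "ainner A (ImA A S z) z = complex_of_real (Im (cinner (A (S z)) z))"
  by (simp add: ainner_def ImA_def bcl_add[OF L] bcl_scale[OF L] bcl_diff[OF L] cinner_simps PT1 complex_eq_iff)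

private lemma PRe: "ainner A (ReA A S z) z = complex_of_real (Re (cinner (A (S z)) z))"
  by (simp add: ainner_def ReA_def bcl_add[OF L] bcl_scale[OF L] cinner_simps PT1 complex_eq_iff)

private lemma s_le: "anorm A z = 1 \<Longrightarrow> cmod (cinner (A (S z)) z) \<le> anorm A (S z)"
  using ACS[OF A, of "S z" z] by simp

private lemma n_le: "anorm A z = 1 \<Longrightarrow> anorm A (S z) \<le> CC"
  using CC(2)[of z] by simp

private lemma half_bound:
  assumes z: "anorm A z = 1" and c: "cmod c = 1/2" and that: "cmod d = 1"
  shows "anorm A (c *\<^sub>C (S z + d *\<^sub>C A_adjoint A S z)) \<le> CC"
proof -
  have "anorm A (c *\<^sub>C (S z + d *\<^sub>C A_adjoint A S z)) = 1/2 * anorm A (S z + d *\<^sub>C A_adjoint A S z)"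
    by (simp add: anorm_scaleC[OF A] c)
  also have "\<dots> \<le> 1/2 * (anorm A (S z) + anorm A (d *\<^sub>C A_adjoint A S z))"
    using anorm_triangle[OF A] by simp
  also have "\<dots> \<le> 1/2 * (CC + CC)"
    using n_le[OF z] Tb[of z] z that by (simp add: anorm_scaleC[OF A])
  finally show ?thesis by simp
qed

private lemma ImA_bound: "anorm A z = 1 \<Longrightarrow> anorm A (ImA A S z) \<le> CC"
proof -
  assume z: "anorm A z = 1"
  have e: "ImA A S z = (1 / (2 * \<i>)) *\<^sub>C (S z + (-1) *\<^sub>C A_adjoint A S z)"
    by (simp add: ImA_def scaleC_minus_left scaleC_one)
  have "cmod (1 / (2 * \<i>)) = 1/2" by (simp add: norm_divide norm_mult)
  then show ?thesis unfolding e by (rule half_bound[OF z]) auto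
qed

private lemma ReA_bound: "anorm A z = 1 \<Longrightarrow> anorm A (ReA A S z) \<le> CC"
proof -
  assume z: "anorm A z = 1"
  have e: "ReA A S z = (1/2) *\<^sub>C (S z + 1 *\<^sub>C A_adjoint A S z)"
    by (simp add: ReA_def scaleC_one)
  show ?thesis unfolding e by (rule half_bound[OF z]) simp_all
qed

private lemma E1: "cmod (ainner A (ReA A S z + \<i> *\<^sub>C A_adjoint A S (S z)) z)
   \<le> sqrt ((cmod (ainner A (S z) z))\<^sup>2 + (anorm A (S z)) ^ 4)"
proof -
  have "(Re (cinner (A (S z)) z))\<^sup>2 \<le> (cmod (cinner (A (S z)) z))\<^sup>2"
    using cmod_power2[of "cinner (A (S z)) z"] by simp
  then show ?thesis unfolding PX1 by (simp add: complex_norm ainner_def power2_eq_square[of "(anorm A (S z))\<^sup>2"]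
     flip: power_add)
qed

private lemma E2: "cmod (ainner A (ImA A S z + \<i> *\<^sub>C A_adjoint A S (S z)) z)
   \<le> sqrt ((cmod (ainner A (S z) z))\<^sup>2 + (anorm A (S z)) ^ 4)"
proof -
  have "(Im (cinner (A (S z)) z))\<^sup>2 \<le> (cmod (cinner (A (S z)) z))\<^sup>2"
    using cmod_power2[of "cinner (A (S z)) z"] by simp
  then show ?thesis unfolding PX2 by (simp add: complex_norm ainner_def power2_eq_square[of "(anorm A (S z))\<^sup>2"]
     flip: power_add)
qed

private lemma E3: "anorm A z = 1 \<Longrightarrow> sqrt ((cmod (ainner A (S z) z))\<^sup>2 + (anorm A (S z)) ^ 4)
   \<le> sqrt (CC\<^sup>2 + CC ^ 4)"
proof -
  assume z: "anorm A z = 1"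
  have a: "cmod (ainner A (S z) z) \<le> CC" using s_le[OF z] n_le[OF z] by (simp add: ainner_def)
  have b: "anorm A (S z) \<le> CC" by (rule n_le[OF z])
  have "(cmod (ainner A (S z) z))\<^sup>2 \<le> CC\<^sup>2" using a by (intro power_mono) simp_all
  moreover have "(anorm A (S z)) ^ 4 \<le> CC ^ 4" using b anorm_nonneg[OF A] by (intro power_mono) simp_all
  ultimately show ?thesis by simp
qed

private lemma E4: "anorm A z = 1 \<Longrightarrow> sqrt ((cmod (ainner A (S z) z))\<^sup>2 + (anorm A (S z)) ^ 4)
   \<le> sqrt ((cmod (ainner A (ReA A S z + \<i> *\<^sub>C A_adjoint A S (S z)) z))\<^sup>2 + (anorm A (ImA A S z))\<^sup>2)"
proof -
  assume z: "anorm A z = 1"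
  have "cmod (ainner A (ImA A S z) z) \<le> anorm A (ImA A S z)"
    using ACS[OF A, of "ImA A S z" z] z by (simp add: ainner_def)
  then have "(Im (cinner (A (S z)) z))\<^sup>2 \<le> (anorm A (ImA A S z))\<^sup>2"
    unfolding PIm using power_mono[OF _ abs_ge_zero, of _ _ 2] by fastforce
  then show ?thesis using cmod_power2[of "cinner (A (S z)) z"]
    unfolding PX1 by (simp add: complex_norm ainner_def power2_eq_square[of "(anorm A (S z))\<^sup>2"] flip: power_add)
qed

private lemma E5: "anorm A z = 1 \<Longrightarrow> sqrt ((cmod (ainner A (S z) z))\<^sup>2 + (anorm A (S z)) ^ 4)
   \<le> sqrt ((cmod (ainner A (ImA A S z + \<i> *\<^sub>C A_adjoint A S (S z)) z))\<^sup>2 + (anorm A (ReA A S z))\<^sup>2)"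
proof -
  assume z: "anorm A z = 1"
  have "cmod (ainner A (ReA A S z) z) \<le> anorm A (ReA A S z)"
    using ACS[OF A, of "ReA A S z" z] z by (simp add: ainner_def)
  then have "(Re (cinner (A (S z)) z))\<^sup>2 \<le> (anorm A (ReA A S z))\<^sup>2"
    unfolding PRe using power_mono[OF _ abs_ge_zero, of _ _ 2] by fastforce
  then show ?thesis using cmod_power2[of "cinner (A (S z)) z"]
    unfolding PX2 by (simp add: complex_norm ainner_def power2_eq_square[of "(anorm A (S z))\<^sup>2"] flip: power_add)
qed

lemma main_ctx:
  shows "max (numradA A (\<lambda>x. ReA A S x + \<i> *\<^sub>C A_adjoint A S (S x)))
             (numradA A (\<lambda>x. ImA A S x + \<i> *\<^sub>C A_adjoint A S (S x)))
           \<le> dnumradA A S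
       \<and> dnumradA A S
           \<le> min (sqrt ((numradA A (\<lambda>x. ReA A S x + \<i> *\<^sub>C A_adjoint A S (S x)))\<^sup>2
                        + (opnormA A (ImA A S))\<^sup>2))
                  (sqrt ((numradA A (\<lambda>x. ImA A S x + \<i> *\<^sub>C A_adjoint A S (S x)))\<^sup>2
                        + (opnormA A (ReA A S))\<^sup>2))"
proof -
  define DS where "DS = {sqrt ((cmod (ainner A (S z) z))\<^sup>2 + (anorm A (S z)) ^ 4) | z. anorm A z = 1}"
  define N1 where "N1 = {cmod (ainner A (ReA A S z + \<i> *\<^sub>C A_adjoint A S (S z)) z) | z. anorm A z = 1}"
  define N2 where "N2 = {cmod (ainner A (ImA A S z + \<i> *\<^sub>C A_adjoint A S (S z)) z) | z. anorm A z = 1}"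
  define O1 where "O1 = {anorm A (ImA A S z) | z. anorm A z = 1}"
  define O2 where "O2 = {anorm A (ReA A S z) | z. anorm A z = 1}"
  have d: "dnumradA A S = Sup (insert 0 DS)" by (simp add: dnumradA_def DS_def)
  have n1: "numradA A (\<lambda>x. ReA A S x + \<i> *\<^sub>C A_adjoint A S (S x)) = Sup (insert 0 N1)"
    by (simp add: numradA_def N1_def)
  have n2: "numradA A (\<lambda>x. ImA A S x + \<i> *\<^sub>C A_adjoint A S (S x)) = Sup (insert 0 N2)"
    by (simp add: numradA_def N2_def)
  have o1: "opnormA A (ImA A S) = Sup (insert 0 O1)" by (simp add: opnormA_def O1_def)
  have o2: "opnormA A (ReA A S) = Sup (insert 0 O2)" by (simp add: opnormA_def O2_def)
  define B where "B = sqrt (CC\<^sup>2 + CC ^ 4)"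
  have B0: "0 \<le> B" using CC(1) by (simp add: B_def)
  have bD: "bdd_above (insert 0 DS)"
    by (rule bdd_aboveI[of _ B]) (auto simp: DS_def B0 B_def intro: E3)
  have bN1: "bdd_above (insert 0 N1)"
    by (rule bdd_aboveI[of _ B]) (auto simp: N1_def B0 B_def intro: order_trans[OF E1 E3])
  have bN2: "bdd_above (insert 0 N2)"
    by (rule bdd_aboveI[of _ B]) (auto simp: N2_def B0 B_def intro: order_trans[OF E2 E3])
  have bO1: "bdd_above (insert 0 O1)"
    by (rule bdd_aboveI[of _ CC]) (auto simp: O1_def CC(1) intro: ImA_bound)
  have bO2: "bdd_above (insert 0 O2)"
    by (rule bdd_aboveI[of _ CC]) (auto simp: O2_def CC(1) intro: ReA_bound)
  have le1: "Sup (insert 0 N1) \<le> Sup (insert 0 DS)"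
  proof (rule cSup_mono[OF _ bD])
    fix b assume "b \<in> insert 0 N1"
    then show "\<exists>a\<in>insert 0 DS. b \<le> a" unfolding N1_def DS_def using E1 by blast
  qed simp
  have le2: "Sup (insert 0 N2) \<le> Sup (insert 0 DS)"
  proof (rule cSup_mono[OF _ bD])
    fix b assume "b \<in> insert 0 N2"
    then show "\<exists>a\<in>insert 0 DS. b \<le> a" unfolding N2_def DS_def using E2 by blast
  qed simp
  have le3: "Sup (insert 0 DS) \<le> sqrt ((Sup (insert 0 N1))\<^sup>2 + (Sup (insert 0 O1))\<^sup>2)"
  proof (rule cSup_least)
    fix x assume "x \<in> insert 0 DS"
    then show "x \<le> sqrt ((Sup (insert 0 N1))\<^sup>2 + (Sup (insert 0 O1))\<^sup>2)"
    proof
      assume "x = 0" then show ?thesis by simp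
    next
      assume "x \<in> DS"
      then obtain z where z: "anorm A z = 1"
        and x: "x = sqrt ((cmod (ainner A (S z) z))\<^sup>2 + (anorm A (S z)) ^ 4)" unfolding DS_def by blast
      have u1: "cmod (ainner A (ReA A S z + \<i> *\<^sub>C A_adjoint A S (S z)) z) \<le> Sup (insert 0 N1)"
        by (rule sup_upper0[OF _ bN1]) (use z in \<open>auto simp: N1_def\<close>)
      have u2: "anorm A (ImA A S z) \<le> Sup (insert 0 O1)"
        by (rule sup_upper0[OF _ bO1]) (use z in \<open>auto simp: O1_def\<close>)
      have "(cmod (ainner A (ReA A S z + \<i> *\<^sub>C A_adjoint A S (S z)) z))\<^sup>2 \<le> (Sup (insert 0 N1))\<^sup>2"
        using u1 by (intro power_mono) simp_all
      moreover have "(anorm A (ImA A S z))\<^sup>2 \<le> (Sup (insert 0 O1))\<^sup>2"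
        using u2 anorm_nonneg[OF A] by (intro power_mono) simp_all
      ultimately show ?thesis unfolding x using E4[OF z] by (meson add_mono order_trans real_sqrt_le_mono)
    qed
  qed simp
  have le4: "Sup (insert 0 DS) \<le> sqrt ((Sup (insert 0 N2))\<^sup>2 + (Sup (insert 0 O2))\<^sup>2)"
  proof (rule cSup_least)
    fix x assume "x \<in> insert 0 DS"
    then show "x \<le> sqrt ((Sup (insert 0 N2))\<^sup>2 + (Sup (insert 0 O2))\<^sup>2)"
    proof
      assume "x = 0" then show ?thesis by simp
    next
      assume "x \<in> DS"
      then obtain z where z: "anorm A z = 1"
        and x: "x = sqrt ((cmod (ainner A (S z) z))\<^sup>2 + (anorm A (S z)) ^ 4)" unfolding DS_def by blast
      have u1: "cmod (ainner A (ImA A S z + \<i> *\<^sub>C A_adjoint A S (S z)) z) \<le> Sup (insert 0 N2)"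
        by (rule sup_upper0[OF _ bN2]) (use z in \<open>auto simp: N2_def\<close>)
      have u2: "anorm A (ReA A S z) \<le> Sup (insert 0 O2)"
        by (rule sup_upper0[OF _ bO2]) (use z in \<open>auto simp: O2_def\<close>)
      have "(cmod (ainner A (ImA A S z + \<i> *\<^sub>C A_adjoint A S (S z)) z))\<^sup>2 \<le> (Sup (insert 0 N2))\<^sup>2"
        using u1 by (intro power_mono) simp_all
      moreover have "(anorm A (ReA A S z))\<^sup>2 \<le> (Sup (insert 0 O2))\<^sup>2"
        using u2 anorm_nonneg[OF A] by (intro power_mono) simp_all
      ultimately show ?thesis unfolding x using E5[OF z] by (meson add_mono order_trans real_sqrt_le_mono)
    qed
  qed simp
  show ?thesis unfolding d n1 n2 o1 o2 using le1 le2 le3 le4 by simp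
qed

end

theorem theorem2p7:
  fixes A S :: "'a::chilbert \<Rightarrow> 'a"
  assumes "positive_op A" and "in_BA A S"
  shows "max (numradA A (\<lambda>x. ReA A S x + \<i> *\<^sub>C A_adjoint A S (S x)))
             (numradA A (\<lambda>x. ImA A S x + \<i> *\<^sub>C A_adjoint A S (S x)))
           \<le> dnumradA A S
       \<and> dnumradA A S
           \<le> min (sqrt ((numradA A (\<lambda>x. ReA A S x + \<i> *\<^sub>C A_adjoint A S (S x)))\<^sup>2
                        + (opnormA A (ImA A S))\<^sup>2))
                  (sqrt ((numradA A (\<lambda>x. ImA A S x + \<i> *\<^sub>C A_adjoint A S (S x)))\<^sup>2
                        + (opnormA A (ReA A S))\<^sup>2))"
  by (rule main_ctx[OF assms])

end
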